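(* In the setting described in the context, for any $c>0$, with probability $1-m^{-\omega(1)}$, $$f(c)\le-\frac15m^{-3/2}q^{1/2}\Delta^2+\frac{m}{\sqrt q}\log m.$$
   Context: Two agents $a,b$, $m$ items, unknown utilities $u^a_i,u^b_i\in[0,1]$, additive. For an allocation (partition $(\mathcal{A}_a,\mathcal{A}_b)$ of $[m]$), $\mathrm{Envy}_{a\to b}=\sum_{i\in\mathcal{A}_b}u^a_i-\sum_{i\in\mathcal{A}_a}u^a_i$, $\mathrm{Envy}_{b\to a}=\sum_{i\in\mathcal{A}_a}u^b_i-\sum_{i\in\mathcal{A}_b}u^b_i$, $\mathrm{Envy}=\max$ of the two; assume $\min_{\mathcal{A}}\mathrm{Envy}(\mathcal{A})\le-\Delta$, with $\Delta=\Delta(m)$, $\Delta\ge m^{1/4}\log^2m$, $\Delta=o(m/\log m)$. Noise variance is $\sigma^2=1$ and $q=m\lceil15\frac{m^{3/2}}{\Delta^2}\log m+\log^2m\rceil$. Each item $i$ is queried $q/m$ times, each query returning independent $y^a\sim N(u^a_i,1)$, $y^b\sim N(u^b_i,1)$, and $v^\nu_i$ is the average of agent $\nu$'s observations for item $i$ (so $v^\nu_i\sim N(u^\nu_i,m/q)$, all independent). For $c>0$, $x_i(c)=1$ if $cv^a_i>v^b_i$ and $x_i(c)=-1$ otherwise; $e_a(c)=-\sum_ix_i(c)u^a_i$, $e_b(c)=\sum_ix_i(c)u^b_i$; and $f(c)=\frac{ce_a(c)+e_b(c)}{1+c}$. The term $m^{-\omega(1)}$ denotes a quantity decaying faster than any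 polynomial in $m$. $\log$ is natural. *)

theory Defs
  imports "HOL-Probability.Probability" "HOL-Library.Landau_Symbols"
begin

text \<open>Items are indexed by {..<m}. An allocation is encoded by the set A of items
  given to agent a (agent b receives {..<m} - A).\<close>

definition envy_ab :: "nat \<Rightarrow> (nat \<Rightarrow> real) \<Rightarrow> nat set \<Rightarrow> real" where
  "envy_ab m ua A = (\<Sum>i\<in>{..<m} - A. ua i) - (\<Sum>i\<in>A. ua i)"

definition envy_ba :: "nat \<Rightarrow> (nat \<Rightarrow> real) \<Rightarrow> nat set \<Rightarrow> real" where
  "envy_ba m ub A = (\<Sum>i\<in>A. ub i) - (\<Sum>i\<in>{..<m} - A. ub i)"

definition envy :: "nat \<Rightarrow> (nat \<Rightarrow> real) \<Rightarrow> (nat \<Rightarrow> real) \<Rightarrow> nat set \<Rightarrow> real" where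
  "envy m ua ub A = max (envy_ab m ua A) (envy_ba m ub A)"

definition num_queries :: "nat \<Rightarrow> real \<Rightarrow> nat" where
  "num_queries m D = m * nat \<lceil>15 * real m powr (3/2) / D\<^sup>2 * ln (real m) + (ln (real m))\<^sup>2\<rceil>"

definition xsel :: "real \<Rightarrow> (nat \<Rightarrow> real) \<Rightarrow> (nat \<Rightarrow> real) \<Rightarrow> nat \<Rightarrow> real" where
  "xsel c va vb i = (if c * va i > vb i then 1 else -1)"

definition e_a :: "nat \<Rightarrow> (nat \<Rightarrow> real) \<Rightarrow> real \<Rightarrow> (nat \<Rightarrow> real) \<Rightarrow> (nat \<Rightarrow> real) \<Rightarrow> real" where
  "e_a m ua c va vb = - (\<Sum>i<m. xsel c va vb i * ua i)"

definition e_b :: "nat \<Rightarrow> (nat \<Rightarrow> real) \<Rightarrow> real \<Rightarrow> (nat \<Rightarrow> real) \<Rightarrow> (nat \<Rightarrow> real) \<Rightarrow> real" where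
  "e_b m ub c va vb = (\<Sum>i<m. xsel c va vb i * ub i)"

definition f_c :: "nat \<Rightarrow> (nat \<Rightarrow> real) \<Rightarrow> (nat \<Rightarrow> real) \<Rightarrow> real \<Rightarrow> (nat \<Rightarrow> real) \<Rightarrow> (nat \<Rightarrow> real) \<Rightarrow> real" where
  "f_c m ua ub c va vb = (c * e_a m ua c va vb + e_b m ub c va vb) / (1 + c)"

text \<open>Joint law of the averaged observations: v^a_i ~ N(u^a_i, m/q), v^b_i ~ N(u^b_i, m/q),
  all independent (second argument of normal_density is the standard deviation).\<close>
definition obs_measure :: "nat \<Rightarrow> real \<Rightarrow> (nat \<Rightarrow> real) \<Rightarrow> (nat \<Rightarrow> real) \<Rightarrow> ((nat \<Rightarrow> real) \<times> (nat \<Rightarrow> real)) measure" where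
  "obs_measure m D ua ub =
     (let s = sqrt (real m / real (num_queries m D)) in
      (\<Pi>\<^sub>M i\<in>{..<m}. density lborel (normal_density (ua i) s)) \<Otimes>\<^sub>M
      (\<Pi>\<^sub>M i\<in>{..<m}. density lborel (normal_density (ub i) s)))"

text \<open>g(m) = m^(-omega(1)): decays faster than any polynomial.\<close>
definition superpoly_small :: "(nat \<Rightarrow> real) \<Rightarrow> bool" where
  "superpoly_small g \<longleftrightarrow> (\<forall>k::nat. (\<lambda>m. real m ^ k * g m) \<longlonglongrightarrow> 0)"

end

theory Submission
  imports Defs "HOL-Real_Asymp.Real_Asymp"
begin

lemma nd_sym: "normal_density 0 \<sigma> (- x) = normal_density 0 \<sigma> x"
  by (simp add: normal_density_def)

lemma nd_tail_refl:
  "(\<integral>\<^sup>+x. ennreal (normal_density 0 \<sigma> x) * indicator {..-t} x \<partial>lborel) =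
   (\<integral>\<^sup>+x. ennreal (normal_density 0 \<sigma> x) * indicator {t..} x \<partial>lborel)"
proof -
  have "(\<integral>\<^sup>+x. ennreal (normal_density 0 \<sigma> x) * indicator {..-t} x \<partial>lborel) =
     ennreal \<bar>-1\<bar> * (\<integral>\<^sup>+x. ennreal (normal_density 0 \<sigma> (0 + -1 * x)) * indicator {..-t} (0 + -1 * x) \<partial>lborel)"
    by (rule nn_integral_real_affine) auto
  also have "\<dots> = (\<integral>\<^sup>+x. ennreal (normal_density 0 \<sigma> x) * indicator {t..} x \<partial>lborel)"
    by (auto intro!: nn_integral_cong simp: nd_sym split: split_indicator)
  finally show ?thesis .
qed

lemma nd_total: "\<sigma> > 0 \<Longrightarrow> (\<integral>\<^sup>+x. ennreal (normal_density 0 \<sigma> x) \<partial>lborel) = 1"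
  by (subst nn_integral_eq_integral) (auto simp: integrable_normal_density[of \<sigma>] integral_normal_density[of \<sigma>])

lemma nd_second_moment: "\<sigma> > 0 \<Longrightarrow> (\<integral>\<^sup>+x. ennreal (normal_density 0 \<sigma> x * x\<^sup>2) \<partial>lborel) = ennreal (\<sigma>\<^sup>2)"
proof -
  assume s: "\<sigma> > 0"
  have "integrable lborel (\<lambda>x. normal_density 0 \<sigma> x * (x - 0)^2)" by (rule integrable_normal_moment[OF s])
  moreover have "integral\<^sup>L lborel (\<lambda>x. normal_density 0 \<sigma> x * (x - 0)^(2*1)) = \<sigma>\<^sup>2"
    by (subst integral_normal_moment_even[OF s]) (use s in \<open>simp add: power2_eq_square\<close>)
  ultimately show ?thesis
    by (subst nn_integral_eq_integral) auto
qed

lemma nd_tail_cheb: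
  assumes s: "\<sigma> > 0" and t: "t > 0"
  shows "(\<integral>\<^sup>+x. ennreal (normal_density 0 \<sigma> x) * indicator {t..} x \<partial>lborel) \<le> ennreal (\<sigma>\<^sup>2 / t\<^sup>2)"
proof -
  have "(\<integral>\<^sup>+x. ennreal (normal_density 0 \<sigma> x) * indicator {t..} x \<partial>lborel) \<le>
        (\<integral>\<^sup>+x. ennreal (1 / t\<^sup>2) * ennreal (normal_density 0 \<sigma> x * x\<^sup>2) \<partial>lborel)"
  proof (intro nn_integral_mono)
    fix x
    show "ennreal (normal_density 0 \<sigma> x) * indicator {t..} x \<le> ennreal (1 / t\<^sup>2) * ennreal (normal_density 0 \<sigma> x * x\<^sup>2)"
    proof (cases "x \<ge> t")
      case True
      have "t\<^sup>2 \<le> x\<^sup>2" using True t by (intro power_mono) auto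
      then have "1 \<le> x\<^sup>2 / t\<^sup>2" using t by simp
      then have "normal_density 0 \<sigma> x \<le> 1 / t\<^sup>2 * (normal_density 0 \<sigma> x * x\<^sup>2)"
        using mult_left_mono[OF \<open>1 \<le> x\<^sup>2 / t\<^sup>2\<close> normal_density_nonneg[of 0 \<sigma> x]] by simp
      then show ?thesis using True by (simp add: ennreal_mult[symmetric] ennreal_leI)
    qed simp
  qed
  also have "\<dots> = ennreal (1 / t\<^sup>2) * ennreal (\<sigma>\<^sup>2)"
    using s by (subst nn_integral_cmult) (auto simp: nd_second_moment)
  also have "\<dots> = ennreal (\<sigma>\<^sup>2 / t\<^sup>2)" by (simp add: ennreal_mult[symmetric])
  finally show ?thesis .
qed

definition kappa0 :: real where "kappa0 = exp (-1/2) / sqrt (2*pi)"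

lemma kappa0_pos: "kappa0 > 0" by (simp add: kappa0_def)

lemma nd_center_lower:
  assumes s: "\<sigma> > 0" and t: "t > 0"
  shows "ennreal (kappa0 * min (t / \<sigma>) 1) \<le> (\<integral>\<^sup>+x. ennreal (normal_density 0 \<sigma> x) * indicator {-t<..<t} x \<partial>lborel)"
proof -
  let ?a = "min t \<sigma>"
  have nds: "normal_density 0 \<sigma> \<sigma> = kappa0 / \<sigma>"
    using s by (simp add: normal_density_def kappa0_def real_sqrt_mult power2_eq_square)
  have "(\<integral>\<^sup>+x. ennreal (normal_density 0 \<sigma> \<sigma>) * indicator {0..?a} x \<partial>lborel) = ennreal (normal_density 0 \<sigma> \<sigma>) * ennreal ?a"
    using s t by (subst nn_integral_cmult_indicator) auto
  also have "\<dots> = ennreal (kappa0 * min (t / \<sigma>) 1)"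
    using s t kappa0_pos by (simp add: nds min_def field_simps ennreal_mult[symmetric])
  finally have "ennreal (kappa0 * min (t / \<sigma>) 1) = (\<integral>\<^sup>+x. ennreal (normal_density 0 \<sigma> \<sigma>) * indicator {0..?a} x \<partial>lborel)"
    by simp
  also have "\<dots> \<le> (\<integral>\<^sup>+x. ennreal (normal_density 0 \<sigma> x) * indicator {-t<..<t} x \<partial>lborel)"
  proof (intro nn_integral_mono_AE)
    have "AE x in lborel. x \<noteq> t" by (rule AE_lborel_singleton)
    then show "AE x in lborel. ennreal (normal_density 0 \<sigma> \<sigma>) * indicator {0..?a} x \<le> ennreal (normal_density 0 \<sigma> x) * indicator {-t<..<t} x"
    proof eventually_elim
      fix x assume xt: "x \<noteq> t"
      show "ennreal (normal_density 0 \<sigma> \<sigma>) * indicator {0..?a} x \<le> ennreal (normal_density 0 \<sigma> x) * indicator {-t<..<t} x"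
      proof (cases "x \<in> {0..?a}")
        case True
        then have x: "0 \<le> x" "x \<le> \<sigma>" "x \<le> t" by auto
        have "x\<^sup>2 \<le> \<sigma>\<^sup>2" using x by (intro power_mono) auto
        then have "normal_density 0 \<sigma> \<sigma> \<le> normal_density 0 \<sigma> x"
          using s by (auto simp: normal_density_def intro!: mult_left_mono divide_right_mono)
        moreover have "x \<in> {-t<..<t}" using x xt t by auto
        ultimately show ?thesis using True by (simp add: ennreal_leI)
      qed simp
    qed
  qed
  finally show ?thesis .
qed

lemma kappa0_ge: "kappa0 \<ge> 1/5"
proof -
  have e: "exp (1::real) \<le> 25/9" using e_less_272 by simp
  have "exp (1/2::real) \<le> 5/3"
  proof -
    have "exp (1/2::real) ^ 2 = exp 1" by (simp add: exp_double[symmetric] power2_eq_square exp_add[symmetric])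
    moreover have "(5/3::real)^2 = 25/9" by (simp add: power2_eq_square)
    ultimately have "exp (1/2::real) ^ 2 \<le> (5/3)^2" using e by simp
    then show ?thesis by (rule power2_le_imp_le) simp
  qed
  then have e2: "exp (-1/2::real) \<ge> 3/5" by (simp add: exp_minus field_simps)
  have "sqrt (2*pi) \<le> sqrt 9" using pi_less_4 by (subst real_sqrt_le_iff) simp
  then have "sqrt (2*pi) \<le> 3" by simp
  have "sqrt (2*pi) > 0" by simp
  have "kappa0 \<ge> (3/5) / sqrt (2*pi)" unfolding kappa0_def
    using divide_right_mono[OF e2, of "sqrt (2*pi)"] \<open>sqrt (2*pi) > 0\<close> by linarith
  moreover have "(3/5) / sqrt (2*pi) \<ge> (3/5) / 3"
    using \<open>sqrt (2*pi) \<le> 3\<close> \<open>sqrt (2*pi) > 0\<close> by (intro divide_left_mono) auto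
  ultimately have "3/5/3 \<le> kappa0" by linarith
  then show ?thesis by simp
qed

lemma nd_tail:
  assumes s: "\<sigma> > 0" and t: "t > 0"
  obtains R where "(\<integral>\<^sup>+x. ennreal (normal_density 0 \<sigma> x) * indicator {t..} x \<partial>lborel) = ennreal R"
    "0 \<le> R" "R \<le> \<sigma>\<^sup>2 / t\<^sup>2" "2 * R + kappa0 * min (t / \<sigma>) 1 \<le> 1"
proof -
  let ?I = "\<lambda>A. (\<integral>\<^sup>+x. ennreal (normal_density 0 \<sigma> x) * indicator A x \<partial>lborel)"
  have sum: "?I {..-t} + ?I {-t<..<t} + ?I {t..} = 1"
  proof -
    have "?I {..-t} + ?I {-t<..<t} + ?I {t..} =
      (\<integral>\<^sup>+x. ennreal (normal_density 0 \<sigma> x) * indicator {..-t} x + ennreal (normal_density 0 \<sigma> x) * indicator {-t<..<t} x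
         + ennreal (normal_density 0 \<sigma> x) * indicator {t..} x \<partial>lborel)"
      by (simp add: nn_integral_add)
    also have "\<dots> = (\<integral>\<^sup>+x. ennreal (normal_density 0 \<sigma> x) \<partial>lborel)"
      using t by (intro nn_integral_cong) (auto split: split_indicator)
    also have "\<dots> = 1" using nd_total[OF s] .
    finally show ?thesis .
  qed
  have refl: "?I {..-t} = ?I {t..}" by (rule nd_tail_refl)
  have cheb: "?I {t..} \<le> ennreal (\<sigma>\<^sup>2 / t\<^sup>2)" by (rule nd_tail_cheb[OF s t])
  have low: "ennreal (kappa0 * min (t / \<sigma>) 1) \<le> ?I {-t<..<t}" by (rule nd_center_lower[OF s t])
  have fin: "?I {t..} < \<infinity>" using cheb by (simp add: le_less_trans)
  obtain R where R: "?I {t..} = ennreal R" "0 \<le> R" using fin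
    by (cases "?I {t..}") auto
  have "?I {-t<..<t} \<le> ?I {..-t} + ?I {-t<..<t} + ?I {t..}"
    by (intro add_increasing2 add_increasing) auto
  then have fin2: "?I {-t<..<t} < \<infinity>" using sum by (simp add: le_less_trans)
  obtain Q where Q: "?I {-t<..<t} = ennreal Q" "0 \<le> Q" using fin2
    by (cases "?I {-t<..<t}") auto
  have "ennreal (R + Q + R) = 1" using sum refl R Q by (simp add: ennreal_plus[symmetric] del: ennreal_plus)
  then have "R + Q + R = 1" by simp
  moreover have "kappa0 * min (t / \<sigma>) 1 \<le> Q" using low Q by simp
  moreover have "R \<le> \<sigma>\<^sup>2 / t\<^sup>2" using cheb R by simp
  ultimately show ?thesis using that R by auto
qed

lemma exp_mix_bound:
  fixes u R :: real
  assumes u: "0 \<le> u" "u \<le> 1/2" and R: "0 \<le> R" "R \<le> 1"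
  shows "exp (-u) * (1 - R) + exp u * R \<le> exp (-u * (1 - 2*R) + 4 * u\<^sup>2 * R)"
proof -
  have "exp (2*u) \<le> 1 + 2*u + (2*u)\<^sup>2" using u by (intro exp_bound) auto
  then have e: "exp (2*u) - 1 \<le> 2*u + 4*u\<^sup>2" by (simp add: power2_eq_square)
  have "exp (-u) * (1 - R) + exp u * R = exp (-u) * (1 + R * (exp (2*u) - 1))"
    by (simp add: algebra_simps exp_minus_inverse mult_exp_exp[symmetric] exp_add[symmetric])
  also have "\<dots> \<le> exp (-u) * (1 + R * (2*u + 4*u\<^sup>2))"
    using e R by (intro mult_left_mono add_left_mono mult_left_mono) auto
  also have "\<dots> \<le> exp (-u) * exp (R * (2*u + 4*u\<^sup>2))"
    by (intro mult_left_mono) (auto simp: exp_ge_add_one_self)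
  also have "\<dots> = exp (-u * (1 - 2*R) + 4 * u\<^sup>2 * R)"
    by (simp add: exp_add[symmetric] algebra_simps)
  finally show ?thesis .
qed

lemma pair_distr_snd:
  assumes "prob_space M" "sigma_finite_measure N"
  shows "distr (M \<Otimes>\<^sub>M N) N snd = N"
proof (intro measure_eqI)
  interpret M: prob_space M by fact
  interpret N: sigma_finite_measure N by fact
  fix A assume A: "A \<in> sets (distr (M \<Otimes>\<^sub>M N) N snd)"
  from A have "emeasure (distr (M \<Otimes>\<^sub>M N) N snd) A = emeasure (M \<Otimes>\<^sub>M N) (space M \<times> A)"
    by (auto simp add: emeasure_distr space_pair_measure dest: sets.sets_into_space intro!: arg_cong2[where f=emeasure])
  with A show "emeasure (distr (M \<Otimes>\<^sub>M N) N snd) A = emeasure N A"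
    by (simp add: N.emeasure_pair_measure_Times M.emeasure_space_1)
qed simp

lemma pair_normal_diff:
  fixes s c ua ub :: real
  assumes s: "s > 0" and c: "c > 0"
  shows "distributed (density lborel (normal_density ua s) \<Otimes>\<^sub>M density lborel (normal_density ub s)) lborel
     (\<lambda>p. c * (fst p - ua) - (snd p - ub)) (normal_density 0 (sqrt ((c * s)\<^sup>2 + s\<^sup>2)))"
proof -
  define Na where "Na = density lborel (normal_density ua s)"
  define Nb where "Nb = density lborel (normal_density ub s)"
  interpret A: prob_space Na unfolding Na_def by (rule prob_space_normal_density) (rule s)
  interpret B: prob_space Nb unfolding Nb_def by (rule prob_space_normal_density) (rule s)
  interpret P: pair_prob_space Na Nb ..
  have setsA: "sets Na = sets borel" by (simp add: Na_def)
  have setsB: "sets Nb = sets borel" by (simp add: Nb_def)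
  have dfst: "distr (Na \<Otimes>\<^sub>M Nb) borel fst = Na"
  proof -
    have "distr (Na \<Otimes>\<^sub>M Nb) borel fst = distr (Na \<Otimes>\<^sub>M Nb) Na fst"
      by (rule distr_cong) (simp_all add: setsA)
    also have "\<dots> = Na" by (rule B.distr_pair_fst)
    finally show ?thesis .
  qed
  have dsnd: "distr (Na \<Otimes>\<^sub>M Nb) borel snd = Nb"
  proof -
    have "distr (Na \<Otimes>\<^sub>M Nb) borel snd = distr (Na \<Otimes>\<^sub>M Nb) Nb snd"
      by (rule distr_cong) (simp_all add: setsB)
    also have "\<dots> = Nb" by (rule pair_distr_snd) unfold_locales
    finally show ?thesis .
  qed
  have eqA: "measurable (Na \<Otimes>\<^sub>M Nb) Na = measurable (Na \<Otimes>\<^sub>M Nb) borel"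
    by (rule measurable_cong_sets[OF refl setsA])
  have eqB: "measurable (Na \<Otimes>\<^sub>M Nb) Nb = measurable (Na \<Otimes>\<^sub>M Nb) borel"
    by (rule measurable_cong_sets[OF refl setsB])
  have eqL: "measurable (Na \<Otimes>\<^sub>M Nb) lborel = measurable (Na \<Otimes>\<^sub>M Nb) borel"
    by (rule measurable_cong_sets) simp_all
  have mfst: "fst \<in> measurable (Na \<Otimes>\<^sub>M Nb) borel"
    using measurable_fst[of Na Nb] unfolding eqA .
  have msnd: "snd \<in> measurable (Na \<Otimes>\<^sub>M Nb) borel"
    using measurable_snd[of Na Nb] unfolding eqB .
  have ind: "P.indep_var borel fst borel snd"
  proof (subst P.indep_var_distribution_eq, intro conjI)
    show "fst \<in> measurable (Na \<Otimes>\<^sub>M Nb) borel" by (rule mfst)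
    show "snd \<in> measurable (Na \<Otimes>\<^sub>M Nb) borel" by (rule msnd)
    have "distr (Na \<Otimes>\<^sub>M Nb) (borel \<Otimes>\<^sub>M borel) (\<lambda>x. (fst x, snd x)) = distr (Na \<Otimes>\<^sub>M Nb) (Na \<Otimes>\<^sub>M Nb) (\<lambda>x. x)"
      by (rule distr_cong[OF refl sets_pair_measure_cong[OF setsA[symmetric] setsB[symmetric]]]) simp
    also have "\<dots> = Na \<Otimes>\<^sub>M Nb" by (rule distr_id)
    finally show "distr (Na \<Otimes>\<^sub>M Nb) borel fst \<Otimes>\<^sub>M distr (Na \<Otimes>\<^sub>M Nb) borel snd =
      distr (Na \<Otimes>\<^sub>M Nb) (borel \<Otimes>\<^sub>M borel) (\<lambda>x. (fst x, snd x))"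
      unfolding dfst dsnd by (rule sym)
  qed
  have distfst: "distributed (Na \<Otimes>\<^sub>M Nb) lborel fst (normal_density ua s)"
    unfolding distributed_def
  proof (intro conjI)
    have "distr (Na \<Otimes>\<^sub>M Nb) lborel fst = distr (Na \<Otimes>\<^sub>M Nb) borel fst"
      by (rule distr_cong) simp_all
    then show "distr (Na \<Otimes>\<^sub>M Nb) lborel fst = density lborel (\<lambda>x. ennreal (normal_density ua s x))"
      using dfst by (simp add: Na_def)
    show "(\<lambda>x. ennreal (normal_density ua s x)) \<in> borel_measurable lborel" by simp
    show "fst \<in> measurable (Na \<Otimes>\<^sub>M Nb) lborel" using mfst unfolding eqL .
  qed
  have distsnd: "distributed (Na \<Otimes>\<^sub>M Nb) lborel snd (normal_density ub s)"
    unfolding distributed_def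
  proof (intro conjI)
    have "distr (Na \<Otimes>\<^sub>M Nb) lborel snd = distr (Na \<Otimes>\<^sub>M Nb) borel snd"
      by (rule distr_cong) simp_all
    then show "distr (Na \<Otimes>\<^sub>M Nb) lborel snd = density lborel (\<lambda>x. ennreal (normal_density ub s x))"
      using dsnd by (simp add: Nb_def)
    show "(\<lambda>x. ennreal (normal_density ub s x)) \<in> borel_measurable lborel" by simp
    show "snd \<in> measurable (Na \<Otimes>\<^sub>M Nb) lborel" using msnd unfolding eqL .
  qed
  have X: "distributed (Na \<Otimes>\<^sub>M Nb) lborel (\<lambda>p. (- c * ua) + c * fst p) (normal_density ((- c * ua) + c * ua) (\<bar>c\<bar> * s))"
    by (rule P.normal_density_affine[OF distfst s]) (use c in auto)
  have X': "distributed (Na \<Otimes>\<^sub>M Nb) lborel (\<lambda>p. c * (fst p - ua)) (normal_density 0 (c * s))"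
    using X c by (simp add: algebra_simps)
  have Y: "distributed (Na \<Otimes>\<^sub>M Nb) lborel (\<lambda>p. (- ub) + 1 * snd p) (normal_density ((- ub) + 1 * ub) (\<bar>1\<bar> * s))"
    by (rule P.normal_density_affine[OF distsnd s]) auto
  have Y': "distributed (Na \<Otimes>\<^sub>M Nb) lborel (\<lambda>p. snd p - ub) (normal_density 0 s)"
    using Y by simp
  have indXY: "P.indep_var borel (\<lambda>p. c * (fst p - ua)) borel (\<lambda>p. snd p - ub)"
    using P.indep_var_compose[OF ind, of "\<lambda>x. c * (x - ua)" borel "\<lambda>x. x - ub" borel]
    by (simp add: o_def)
  have "distributed (Na \<Otimes>\<^sub>M Nb) lborel (\<lambda>p. c * (fst p - ua) - (snd p - ub)) (normal_density (0 - 0) (sqrt ((c * s)\<^sup>2 + s\<^sup>2)))"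
    by (rule P.diff_indep_normal[OF indXY _ s X' Y']) (use c s in simp)
  then show ?thesis by (simp add: Na_def Nb_def)
qed

lemma coord_bound:
  fixes s c ua ub lam :: real
  assumes s: "s > 0" and c: "c > 0" and lam: "0 \<le> lam" "lam \<le> 1/2"
    and wb: "\<bar>ub - c * ua\<bar> \<le> 1 + c"
  shows "(\<integral>\<^sup>+p. ennreal (exp (lam * ((if c * fst p > snd p then 1 else -1) * ((ub - c * ua) / (1 + c)))))
           \<partial>(density lborel (normal_density ua s) \<Otimes>\<^sub>M density lborel (normal_density ub s)))
         \<le> ennreal (exp (- lam * kappa0 * (\<bar>ub - c * ua\<bar> / (1 + c)) * min (\<bar>c * ua - ub\<bar> / sqrt ((c * s)\<^sup>2 + s\<^sup>2)) 1
                          + 4 * lam\<^sup>2 * s\<^sup>2))"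
proof -
  define Na where "Na = density lborel (normal_density ua s)"
  define Nb where "Nb = density lborel (normal_density ub s)"
  define Pi where "Pi = Na \<Otimes>\<^sub>M Nb"
  interpret A: prob_space Na unfolding Na_def by (rule prob_space_normal_density) (rule s)
  interpret B: prob_space Nb unfolding Nb_def by (rule prob_space_normal_density) (rule s)
  interpret P: pair_prob_space Na Nb ..
  have PP: "prob_space Pi" unfolding Pi_def by (rule P.prob_space_axioms)
  interpret Q: prob_space Pi by (rule PP)
  define w where "w = (ub - c * ua) / (1 + c)"
  define d where "d = c * ua - ub"
  define \<sigma> where "\<sigma> = sqrt ((c * s)\<^sup>2 + s\<^sup>2)"
  define Z where "Z = (\<lambda>p::real\<times>real. c * (fst p - ua) - (snd p - ub))"
  have \<sigma>pos: "\<sigma> > 0" using s by (simp add: \<sigma>_def add_nonneg_pos)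
  have \<sigma>sq: "\<sigma>\<^sup>2 = (c\<^sup>2 + 1) * s\<^sup>2" using s by (simp add: \<sigma>_def power_mult_distrib algebra_simps)
  have distZ: "distributed Pi lborel Z (normal_density 0 \<sigma>)"
    unfolding Pi_def Na_def Nb_def Z_def \<sigma>_def by (rule pair_normal_diff[OF s c])
  have Zm: "Z \<in> measurable Pi lborel" using distZ by (rule distributed_measurable)
  define G where "G = Z -` {-d<..} \<inter> space Pi"
  have Geq: "\<And>p. p \<in> G \<longleftrightarrow> p \<in> space Pi \<and> c * fst p > snd p"
    by (auto simp: G_def Z_def d_def algebra_simps)
  have Gs: "G \<in> sets Pi" unfolding G_def by (rule measurable_sets[OF Zm]) simp
  define pG where "pG = Q.prob G"
  have pG01: "0 \<le> pG" "pG \<le> 1" by (auto simp: pG_def)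
  have "(\<integral>\<^sup>+p. ennreal (exp (lam * ((if c * fst p > snd p then 1 else -1) * w))) \<partial>Pi)
      = (\<integral>\<^sup>+p. ennreal (exp (lam * w)) * indicator G p + ennreal (exp (- lam * w)) * indicator (space Pi - G) p \<partial>Pi)"
    by (intro nn_integral_cong) (auto simp: Geq split: split_indicator)
  also have "\<dots> = ennreal (exp (lam * w)) * emeasure Pi G + ennreal (exp (- lam * w)) * emeasure Pi (space Pi - G)"
    using Gs by (subst nn_integral_add) (auto simp: nn_integral_cmult_indicator)
  also have "\<dots> = ennreal (exp (lam * w) * pG + exp (- lam * w) * (1 - pG))"
    using Gs pG01 by (simp add: Q.emeasure_eq_measure Q.prob_compl pG_def ennreal_mult[symmetric] ennreal_plus[symmetric] del: ennreal_plus)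
  finally have int_eq: "(\<integral>\<^sup>+p. ennreal (exp (lam * ((if c * fst p > snd p then 1 else -1) * w))) \<partial>Pi)
      = ennreal (exp (lam * w) * pG + exp (- lam * w) * (1 - pG))" .
  have main: "exp (lam * w) * pG + exp (- lam * w) * (1 - pG)
     \<le> exp (- lam * kappa0 * \<bar>w\<bar> * min (\<bar>d\<bar> / \<sigma>) 1 + 4 * lam\<^sup>2 * s\<^sup>2)"
  proof (cases "d = 0")
    case True
    then have "w = 0" by (simp add: w_def d_def)
    then show ?thesis by simp
  next
    case False
    define t where "t = \<bar>d\<bar>"
    have tpos: "t > 0" using False by (simp add: t_def)
    obtain R where R: "(\<integral>\<^sup>+x. ennreal (normal_density 0 \<sigma> x) * indicator {t..} x \<partial>lborel) = ennreal R"
      "0 \<le> R" "R \<le> \<sigma>\<^sup>2 / t\<^sup>2" "2 * R + kappa0 * min (t / \<sigma>) 1 \<le> 1"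
      using nd_tail[OF \<sigma>pos tpos] by blast
    define u where "u = lam * \<bar>w\<bar>"
    have wabs: "\<bar>w\<bar> = t / (1 + c)" using c by (simp add: w_def t_def d_def abs_minus_commute)
    have wle1: "\<bar>w\<bar> \<le> 1" using wb c by (simp add: w_def)
    have "lam * \<bar>w\<bar> \<le> lam * 1" using lam wle1 by (intro mult_left_mono) auto
    then have u: "0 \<le> u" "u \<le> 1/2" using lam by (auto simp: u_def)
    obtain r where r: "exp (lam * w) * pG + exp (- lam * w) * (1 - pG) = exp (-u) * (1 - r) + exp u * r"
       "0 \<le> r" "r \<le> R"
    proof (cases "d > 0")
      case True
      have wneg: "w < 0" using True c unfolding w_def d_def by (intro divide_neg_pos) auto
      have "emeasure Pi (Z -` {..-d} \<inter> space Pi) = (\<integral>\<^sup>+x. ennreal (normal_density 0 \<sigma> x) * indicator {..-d} x \<partial>lborel)"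
        by (rule distributed_emeasure[OF distZ]) simp
      also have "\<dots> = ennreal R" using R(1) True by (simp add: nd_tail_refl t_def)
      finally have e1: "emeasure Pi (Z -` {..-d} \<inter> space Pi) = ennreal R" .
      have "Z -` {..-d} \<inter> space Pi = space Pi - G" by (auto simp: G_def)
      then have "1 - pG = R" using e1 R(2) Gs by (simp add: Q.emeasure_eq_measure Q.prob_compl pG_def)
      then have pGR: "pG = 1 - R" by simp
      have lw: "lam * w = - u" using wneg by (simp add: u_def)
      show ?thesis by (rule that[of R]) (use R(2) in \<open>simp_all add: pGR lw\<close>)
    next
      case False
      then have dneg: "d < 0" using \<open>d \<noteq> 0\<close> by simp
      have wpos: "w > 0" using dneg c unfolding w_def d_def by (intro divide_pos_pos) auto
      have "emeasure Pi (Z -` {t..} \<inter> space Pi) = (\<integral>\<^sup>+x. ennreal (normal_density 0 \<sigma> x) * indicator {t..} x \<partial>lborel)"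
        by (rule distributed_emeasure[OF distZ]) simp
      also have "\<dots> = ennreal R" using R(1) .
      finally have e1: "emeasure Pi (Z -` {t..} \<inter> space Pi) = ennreal R" .
      have sub: "G \<subseteq> Z -` {t..} \<inter> space Pi" using dneg by (auto simp: G_def t_def)
      have "emeasure Pi G \<le> emeasure Pi (Z -` {t..} \<inter> space Pi)"
        by (rule emeasure_mono[OF sub]) (rule measurable_sets[OF Zm], simp)
      then have "pG \<le> R" using e1 R(2) by (simp add: Q.emeasure_eq_measure pG_def)
      moreover have "lam * w = u" using wpos by (simp add: u_def)
      ultimately show ?thesis using that[of pG] pG01 by (simp add: algebra_simps)
    qed
    have eu: "exp (-u) \<le> exp u" using u by simp
    have "exp (-u) * (1 - r) + exp u * r \<le> exp (-u) * (1 - R) + exp u * R"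
    proof -
      have "exp (-u) * (1 - r) + exp u * r = exp (-u) + r * (exp u - exp (-u))" by (simp add: algebra_simps)
      also have "\<dots> \<le> exp (-u) + R * (exp u - exp (-u))"
        using r(3) eu by (intro add_left_mono mult_right_mono) auto
      also have "\<dots> = exp (-u) * (1 - R) + exp u * R" by (simp add: algebra_simps)
      finally show ?thesis .
    qed
    also have "\<dots> \<le> exp (-u * (1 - 2*R) + 4 * u\<^sup>2 * R)"
    proof (intro exp_mix_bound)
      have "kappa0 * min (t / \<sigma>) 1 \<ge> 0" using kappa0_pos tpos \<sigma>pos by simp
      then show "R \<le> 1" using R(4) by linarith
    qed (use u R(2) in auto)
    also have "\<dots> \<le> exp (- lam * kappa0 * \<bar>w\<bar> * min (\<bar>d\<bar> / \<sigma>) 1 + 4 * lam\<^sup>2 * s\<^sup>2)"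
    proof (intro exp_mono add_mono)
      have "kappa0 * min (t / \<sigma>) 1 \<le> 1 - 2 * R" using R(4) by simp
      then have "u * (kappa0 * min (t / \<sigma>) 1) \<le> u * (1 - 2 * R)" using u by (intro mult_left_mono) auto
      then show "- u * (1 - 2 * R) \<le> - lam * kappa0 * \<bar>w\<bar> * min (\<bar>d\<bar> / \<sigma>) 1"
        by (simp add: u_def t_def algebra_simps)
      have "u\<^sup>2 * R \<le> u\<^sup>2 * (\<sigma>\<^sup>2 / t\<^sup>2)" using R(3) by (intro mult_left_mono) auto
      also have "\<dots> = lam\<^sup>2 * (\<sigma>\<^sup>2 / (1 + c)\<^sup>2)"
        using tpos c by (simp add: u_def wabs power_mult_distrib power_divide field_simps)
      also have "\<dots> \<le> lam\<^sup>2 * s\<^sup>2"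
      proof (intro mult_left_mono)
        have "c\<^sup>2 + 1 \<le> (1 + c)\<^sup>2" using c by (simp add: power2_eq_square algebra_simps)
        then have "(c\<^sup>2 + 1) * s\<^sup>2 \<le> (1 + c)\<^sup>2 * s\<^sup>2" by (intro mult_right_mono) auto
        then have "\<sigma>\<^sup>2 \<le> (1 + c)\<^sup>2 * s\<^sup>2" unfolding \<sigma>sq .
        then show "\<sigma>\<^sup>2 / (1 + c)\<^sup>2 \<le> s\<^sup>2" using c by (simp add: divide_le_eq mult.commute)
      qed simp
      finally show "4 * u\<^sup>2 * R \<le> 4 * lam\<^sup>2 * s\<^sup>2" by simp
    qed
    finally show ?thesis using r(1) by simp
  qed
  have ac: "\<bar>1 + c\<bar> = 1 + c" using c by simp
  show ?thesis
    using int_eq main ac unfolding Pi_def Na_def Nb_def w_def d_def \<sigma>_def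
    by (simp add: ennreal_leI)
qed

lemma prod_pair_factor:
  fixes Ma :: "'i \<Rightarrow> 'a measure" and Mb :: "'i \<Rightarrow> 'b measure" and h :: "'i \<Rightarrow> 'a \<times> 'b \<Rightarrow> ennreal"
  assumes I: "finite I" and pa: "\<And>i. prob_space (Ma i)" and pb: "\<And>i. prob_space (Mb i)"
    and hm: "\<And>i. i \<in> I \<Longrightarrow> h i \<in> borel_measurable (Ma i \<Otimes>\<^sub>M Mb i)"
  shows "(\<integral>\<^sup>+v. (\<Prod>i\<in>I. h i (fst v i, snd v i)) \<partial>(Pi\<^sub>M I Ma \<Otimes>\<^sub>M Pi\<^sub>M I Mb))
       = (\<Prod>i\<in>I. \<integral>\<^sup>+p. h i p \<partial>(Ma i \<Otimes>\<^sub>M Mb i))"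
proof -
  interpret PA: product_prob_space Ma using pa by (simp add: product_prob_space_def product_prob_space_axioms_def product_sigma_finite_def prob_space_imp_sigma_finite)
  interpret PB: product_prob_space Mb using pb by (simp add: product_prob_space_def product_prob_space_axioms_def product_sigma_finite_def prob_space_imp_sigma_finite)
  have sfB: "sigma_finite_measure (Pi\<^sub>M I Mb)"
    using prob_space_PiM[of I Mb] pb by (simp add: prob_space_imp_sigma_finite)
  have sfb: "\<And>i. sigma_finite_measure (Mb i)" using pb by (simp add: prob_space_imp_sigma_finite)
  have fm: "(\<lambda>v. \<Prod>i\<in>I. h i (fst v i, snd v i)) \<in> borel_measurable (Pi\<^sub>M I Ma \<Otimes>\<^sub>M Pi\<^sub>M I Mb)"
  proof (rule borel_measurable_prod_ennreal)
    fix i assume i: "i \<in> I"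
    have "(\<lambda>v. (fst v i, snd v i)) \<in> measurable (Pi\<^sub>M I Ma \<Otimes>\<^sub>M Pi\<^sub>M I Mb) (Ma i \<Otimes>\<^sub>M Mb i)"
      using i by (intro measurable_Pair measurable_compose[OF measurable_fst measurable_component_singleton]
         measurable_compose[OF measurable_snd measurable_component_singleton])
    then show "(\<lambda>v. h i (fst v i, snd v i)) \<in> borel_measurable (Pi\<^sub>M I Ma \<Otimes>\<^sub>M Pi\<^sub>M I Mb)"
      by (rule measurable_compose) (rule hm[OF i])
  qed
  have "(\<integral>\<^sup>+v. (\<Prod>i\<in>I. h i (fst v i, snd v i)) \<partial>(Pi\<^sub>M I Ma \<Otimes>\<^sub>M Pi\<^sub>M I Mb))
      = (\<integral>\<^sup>+a. \<integral>\<^sup>+b. (\<Prod>i\<in>I. h i (a i, b i)) \<partial>Pi\<^sub>M I Mb \<partial>Pi\<^sub>M I Ma)"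
    using sigma_finite_measure.nn_integral_fst[OF sfB fm] by simp
  also have "\<dots> = (\<integral>\<^sup>+a. (\<Prod>i\<in>I. \<integral>\<^sup>+y. h i (a i, y) \<partial>Mb i) \<partial>Pi\<^sub>M I Ma)"
  proof (intro nn_integral_cong)
    fix a assume a: "a \<in> space (Pi\<^sub>M I Ma)"
    show "(\<integral>\<^sup>+b. (\<Prod>i\<in>I. h i (a i, b i)) \<partial>Pi\<^sub>M I Mb) = (\<Prod>i\<in>I. \<integral>\<^sup>+y. h i (a i, y) \<partial>Mb i)"
    proof (rule PB.product_nn_integral_prod[OF I, of "\<lambda>i y. h i (a i, y)"])
      fix i assume i: "i \<in> I"
      have "a i \<in> space (Ma i)" using a i by (auto simp: space_PiM)
      then show "(\<lambda>y. h i (a i, y)) \<in> borel_measurable (Mb i)"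
        by (intro measurable_compose[OF measurable_Pair1' hm[OF i]])
    qed
  qed
  also have "\<dots> = (\<Prod>i\<in>I. \<integral>\<^sup>+x. (\<integral>\<^sup>+y. h i (x, y) \<partial>Mb i) \<partial>Ma i)"
  proof (rule PA.product_nn_integral_prod[OF I, of "\<lambda>i x. \<integral>\<^sup>+y. h i (x, y) \<partial>Mb i"])
    fix i assume i: "i \<in> I"
    show "(\<lambda>x. \<integral>\<^sup>+y. h i (x, y) \<partial>Mb i) \<in> borel_measurable (Ma i)"
      by (rule sigma_finite_measure.borel_measurable_nn_integral_fst[OF sfb hm[OF i]])
  qed
  also have "\<dots> = (\<Prod>i\<in>I. \<integral>\<^sup>+p. h i p \<partial>(Ma i \<Otimes>\<^sub>M Mb i))"
    by (intro prod.cong refl sigma_finite_measure.nn_integral_fst[OF sfb hm])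
  finally show ?thesis .
qed

lemma tmin_bound:
  fixes t \<sigma> \<theta> :: real
  assumes t: "t \<ge> 0" and s: "\<sigma> > 0" and th: "0 \<le> \<theta>" "\<theta> \<le> 1/2"
  shows "2 * \<theta> * t - \<theta>\<^sup>2 * \<sigma> \<le> t * min (t / \<sigma>) 1"
proof (cases "t \<le> \<sigma>")
  case True
  then have "min (t / \<sigma>) 1 = t / \<sigma>" using s by (simp add: min_def divide_le_eq)
  moreover have "0 \<le> (t - \<theta> * \<sigma>)\<^sup>2 / \<sigma>" using s by simp
  moreover have "(t - \<theta> * \<sigma>)\<^sup>2 / \<sigma> = t * (t / \<sigma>) - (2 * \<theta> * t - \<theta>\<^sup>2 * \<sigma>)"
    using s by (simp add: power2_eq_square field_simps)
  ultimately show ?thesis by linarith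
next
  case False
  then have "min (t / \<sigma>) 1 = 1" using s by (simp add: min_def divide_le_eq)
  moreover have "0 \<le> t * (1 - 2 * \<theta>)" using t th by simp
  moreover have "0 \<le> \<theta>\<^sup>2 * \<sigma>" using s by simp
  ultimately show ?thesis by (simp add: algebra_simps)
qed

lemma sum_bound_real:
  fixes m :: nat and t :: "nat \<Rightarrow> real" and s c \<Delta> :: real
  assumes m: "m \<ge> 1" and s: "s > 0" and c: "c > 0"
    and sumd: "(1 + c) * \<Delta> \<le> (\<Sum>i<m. t i)" and t: "\<And>i. t i \<ge> 0" and D0: "0 \<le> \<Delta>"
    and th: "4 * \<Delta> \<le> real m * s"
  shows "kappa0 * \<Delta>\<^sup>2 / (real m * s) \<le> kappa0 / (1 + c) * (\<Sum>i<m. t i * min (t i / sqrt ((c * s)\<^sup>2 + s\<^sup>2)) 1)"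
proof -
  define \<sigma> where "\<sigma> = sqrt ((c * s)\<^sup>2 + s\<^sup>2)"
  have \<sigma>pos: "\<sigma> > 0" using s by (simp add: \<sigma>_def add_nonneg_pos)
  have \<sigma>sq: "\<sigma>\<^sup>2 = (c\<^sup>2 + 1) * s\<^sup>2" using s by (simp add: \<sigma>_def power_mult_distrib algebra_simps)
  have mpos: "real m > 0" using m by simp
  have s\<sigma>: "s \<le> \<sigma>"
  proof -
    have "s\<^sup>2 \<le> \<sigma>\<^sup>2" using \<sigma>sq c s by (simp add: algebra_simps)
    then show ?thesis using \<sigma>pos s by (simp add: power2_le_iff_abs_le abs_of_pos)
  qed
  have c\<sigma>: "(1 + c) * s \<le> 2 * \<sigma>"
  proof -
    have h: "(1 + c)\<^sup>2 \<le> 4 * (c\<^sup>2 + 1)"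
    proof -
      have "0 \<le> (c - 1)\<^sup>2 + 2 * c\<^sup>2 + 2" by simp
      moreover have "(c - 1)\<^sup>2 + 2 * c\<^sup>2 + 2 = 4 * (c\<^sup>2 + 1) - (1 + c)\<^sup>2"
        by (simp add: power2_eq_square algebra_simps)
      ultimately show ?thesis by linarith
    qed
    have "((1 + c) * s)\<^sup>2 = (1 + c)\<^sup>2 * s\<^sup>2" by (simp add: power_mult_distrib)
    also have "\<dots> \<le> 4 * (c\<^sup>2 + 1) * s\<^sup>2" using h by (intro mult_right_mono) auto
    also have "\<dots> = (2 * \<sigma>)\<^sup>2" using \<sigma>sq by (simp add: power_mult_distrib)
    finally have "((1 + c) * s)\<^sup>2 \<le> (2 * \<sigma>)\<^sup>2" .
    then show ?thesis by (rule power2_le_imp_le) (use \<sigma>pos in simp)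
  qed
  have c\<sigma>2: "\<sigma> \<le> (1 + c) * s"
  proof -
    have "\<sigma>\<^sup>2 \<le> ((1 + c) * s)\<^sup>2"
      using \<sigma>sq c s by (simp add: power_mult_distrib power2_eq_square algebra_simps)
    then show ?thesis using \<sigma>pos s c by (simp add: power2_le_iff_abs_le abs_of_pos)
  qed
  define \<theta> where "\<theta> = (1 + c) * \<Delta> / (real m * \<sigma>)"
  have th0: "0 \<le> \<theta>" using c D0 \<sigma>pos mpos by (simp add: \<theta>_def)
  have th1: "\<theta> \<le> 1/2"
  proof -
    have "((1 + c) * s) * \<Delta> \<le> (2 * \<sigma>) * \<Delta>" using c\<sigma> D0 by (rule mult_right_mono)
    then have A: "(1 + c) * \<Delta> * s \<le> 2 * (\<sigma> * \<Delta>)" by (simp add: algebra_simps)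
    have "\<sigma> * (4 * \<Delta>) \<le> \<sigma> * (real m * s)" using th \<sigma>pos
      by (intro mult_left_mono) auto
    then have B: "4 * (\<sigma> * \<Delta>) \<le> \<sigma> * (real m * s)" by (simp add: algebra_simps)
    from A B have "(1 + c) * \<Delta> * s \<le> \<sigma> * (real m * s) / 2" by linarith
    then have "((1 + c) * \<Delta>) * s \<le> (\<sigma> * real m / 2) * s" by (simp add: algebra_simps)
    then have "(1 + c) * \<Delta> \<le> \<sigma> * real m / 2" using s by (rule mult_right_le_imp_le)
    then show ?thesis using \<sigma>pos mpos by (simp add: \<theta>_def field_simps)
  qed
  have "(\<Sum>i<m. 2 * \<theta> * t i - \<theta>\<^sup>2 * \<sigma>) \<le> (\<Sum>i<m. t i * min (t i / \<sigma>) 1)"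
    by (intro sum_mono tmin_bound t \<sigma>pos th0 th1)
  moreover have "(\<Sum>i<m. 2 * \<theta> * t i - \<theta>\<^sup>2 * \<sigma>) = 2 * \<theta> * (\<Sum>i<m. t i) - real m * \<theta>\<^sup>2 * \<sigma>"
    by (simp add: sum_subtractf sum_distrib_left)
  moreover have "2 * \<theta> * ((1 + c) * \<Delta>) \<le> 2 * \<theta> * (\<Sum>i<m. t i)"
    using sumd th0 by (intro mult_left_mono) auto
  moreover have "2 * \<theta> * ((1 + c) * \<Delta>) - real m * \<theta>\<^sup>2 * \<sigma> = (1 + c)\<^sup>2 * \<Delta>\<^sup>2 / (real m * \<sigma>)"
    using mpos \<sigma>pos by (simp add: \<theta>_def power2_eq_square field_simps)
  ultimately have key0: "(1 + c)\<^sup>2 * \<Delta>\<^sup>2 / (real m * \<sigma>) \<le> (\<Sum>i<m. t i * min (t i / \<sigma>) 1)" by linarith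
  define Y where "Y = \<Delta>\<^sup>2 / (real m * \<sigma>)"
  have key: "(1 + c)\<^sup>2 * Y \<le> (\<Sum>i<m. t i * min (t i / \<sigma>) 1)" using key0 by (simp add: Y_def)
  have "kappa0 * \<Delta>\<^sup>2 / (real m * s) \<le> kappa0 * ((1 + c) * Y)"
  proof -
    have "1 / s \<le> (1 + c) / \<sigma>" using c\<sigma>2 s \<sigma>pos by (simp add: field_simps)
    then have "(\<Delta>\<^sup>2 / real m) * (1 / s) \<le> (\<Delta>\<^sup>2 / real m) * ((1 + c) / \<sigma>)"
      by (intro mult_left_mono) auto
    then have "\<Delta>\<^sup>2 / (real m * s) \<le> (1 + c) * Y" by (simp add: Y_def mult.commute)
    then have "kappa0 * (\<Delta>\<^sup>2 / (real m * s)) \<le> kappa0 * ((1 + c) * Y)"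
      using kappa0_pos by (intro mult_left_mono) auto
    then show ?thesis by simp
  qed
  also have "\<dots> = kappa0 / (1 + c) * ((1 + c)\<^sup>2 * Y)"
  proof -
    have ne: "1 + c \<noteq> 0" using c by simp
    show ?thesis using ne by (simp add: power2_eq_square)
  qed
  also have "\<dots> \<le> kappa0 / (1 + c) * (\<Sum>i<m. t i * min (t i / \<sigma>) 1)"
    using key kappa0_pos c by (intro mult_left_mono) auto
  finally show ?thesis by (simp add: \<sigma>_def)
qed

lemma main_bound:
  fixes m :: nat and ua ub :: "nat \<Rightarrow> real" and c s \<Delta> lam T :: real
  assumes m: "m \<ge> 1" and s: "s > 0" and c: "c > 0"
    and u01: "\<forall>i<m. ua i \<in> {0..1} \<and> ub i \<in> {0..1}"
    and sumd: "(1 + c) * \<Delta> \<le> (\<Sum>i<m. \<bar>c * ua i - ub i\<bar>)" and D0: "0 \<le> \<Delta>"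
    and th: "4 * \<Delta> \<le> real m * s"
    and lam: "0 \<le> lam" "lam \<le> 1/2"
  shows "emeasure ((\<Pi>\<^sub>M i\<in>{..<m}. density lborel (normal_density (ua i) s)) \<Otimes>\<^sub>M (\<Pi>\<^sub>M i\<in>{..<m}. density lborel (normal_density (ub i) s)))
     {v \<in> space ((\<Pi>\<^sub>M i\<in>{..<m}. density lborel (normal_density (ua i) s)) \<Otimes>\<^sub>M (\<Pi>\<^sub>M i\<in>{..<m}. density lborel (normal_density (ub i) s))).
        T < (\<Sum>i<m. (if c * fst v i > snd v i then 1 else -1) * ((ub i - c * ua i) / (1 + c)))}
     \<le> ennreal (exp (- lam * T - lam * (kappa0 * \<Delta>\<^sup>2 / (real m * s)) + 4 * lam\<^sup>2 * real m * s\<^sup>2))"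
proof -
  define I where "I = {..<m}"
  define Ma where "Ma = (\<lambda>i. density lborel (normal_density (ua i) s))"
  define Mb where "Mb = (\<lambda>i. density lborel (normal_density (ub i) s))"
  define \<Omega> where "\<Omega> = Pi\<^sub>M I Ma \<Otimes>\<^sub>M Pi\<^sub>M I Mb"
  define w where "w = (\<lambda>i. (ub i - c * ua i) / (1 + c))"
  define F where "F = (\<lambda>v. (\<Sum>i<m. (if c * fst v i > snd v i then 1 else -1) * w i))"
  define E where "E = {v \<in> space \<Omega>. T < F v}"
  define h where "h = (\<lambda>i (p::real\<times>real). ennreal (exp (lam * ((if c * fst p > snd p then 1 else -1) * w i))))"
  define \<sigma> where "\<sigma> = sqrt ((c * s)\<^sup>2 + s\<^sup>2)"
  define a where "a = (\<lambda>i. - lam * kappa0 * (\<bar>ub i - c * ua i\<bar> / (1 + c)) * min (\<bar>c * ua i - ub i\<bar> / \<sigma>) 1 + 4 * lam\<^sup>2 * s\<^sup>2)"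
  have pa: "\<And>i. prob_space (Ma i)" unfolding Ma_def by (rule prob_space_normal_density) (rule s)
  have pb: "\<And>i. prob_space (Mb i)" unfolding Mb_def by (rule prob_space_normal_density) (rule s)
  have setsMa: "\<And>i. sets (Ma i) = sets borel" by (simp add: Ma_def)
  have setsMb: "\<And>i. sets (Mb i) = sets borel" by (simp add: Mb_def)
  have hm: "\<And>i. h i \<in> borel_measurable (Ma i \<Otimes>\<^sub>M Mb i)"
  proof -
    fix i
    have eq: "borel_measurable (Ma i \<Otimes>\<^sub>M Mb i) = borel_measurable (borel \<Otimes>\<^sub>M borel)"
      by (rule measurable_cong_sets[OF sets_pair_measure_cong[OF setsMa setsMb] refl])
    have "h i \<in> borel_measurable (borel \<Otimes>\<^sub>M borel)" unfolding h_def by measurable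
    then show "h i \<in> borel_measurable (Ma i \<Otimes>\<^sub>M Mb i)" unfolding eq .
  qed
  have fm: "(\<lambda>v. \<Prod>i\<in>I. h i (fst v i, snd v i)) \<in> borel_measurable \<Omega>"
    unfolding \<Omega>_def
  proof (rule borel_measurable_prod_ennreal)
    fix i assume i: "i \<in> I"
    have "(\<lambda>v. (fst v i, snd v i)) \<in> measurable (Pi\<^sub>M I Ma \<Otimes>\<^sub>M Pi\<^sub>M I Mb) (Ma i \<Otimes>\<^sub>M Mb i)"
      using i by (intro measurable_Pair measurable_compose[OF measurable_fst measurable_component_singleton]
         measurable_compose[OF measurable_snd measurable_component_singleton])
    then show "(\<lambda>v. h i (fst v i, snd v i)) \<in> borel_measurable (Pi\<^sub>M I Ma \<Otimes>\<^sub>M Pi\<^sub>M I Mb)"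
      by (rule measurable_compose) (rule hm)
  qed
  have markov: "emeasure \<Omega> E \<le> (\<integral>\<^sup>+v. ennreal (exp (lam * (F v - T))) \<partial>\<Omega>)"
  proof (cases "E \<in> sets \<Omega>")
    case True
    have "emeasure \<Omega> E = (\<integral>\<^sup>+v. indicator E v \<partial>\<Omega>)" using True by simp
    also have "\<dots> \<le> (\<integral>\<^sup>+v. ennreal (exp (lam * (F v - T))) \<partial>\<Omega>)"
    proof (intro nn_integral_mono)
      fix v
      show "indicator E v \<le> ennreal (exp (lam * (F v - T)))"
      proof (cases "v \<in> E")
        case True
        then have "0 \<le> lam * (F v - T)" using lam by (simp add: E_def)
        then have "1 \<le> exp (lam * (F v - T))" by simp
        then show ?thesis using True by simp
      qed simp
    qed
    finally show ?thesis .
  next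
    case False
    then show ?thesis by (simp add: emeasure_notin_sets)
  qed
  have pw: "\<And>v. ennreal (exp (lam * (F v - T))) = ennreal (exp (- lam * T)) * (\<Prod>i\<in>I. h i (fst v i, snd v i))"
  proof -
    fix v
    have "exp (lam * (F v - T)) = exp (- lam * T) * exp (\<Sum>i\<in>I. lam * ((if c * fst v i > snd v i then 1 else -1) * w i))"
      by (simp add: F_def I_def sum_distrib_left exp_add[symmetric] algebra_simps)
    also have "\<dots> = exp (- lam * T) * (\<Prod>i\<in>I. exp (lam * ((if c * fst v i > snd v i then 1 else -1) * w i)))"
      by (simp add: exp_sum I_def)
    finally have ee: "exp (lam * (F v - T)) = exp (- lam * T) * (\<Prod>i\<in>I. exp (lam * ((if c * fst v i > snd v i then 1 else -1) * w i)))" .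
    show "ennreal (exp (lam * (F v - T))) = ennreal (exp (- lam * T)) * (\<Prod>i\<in>I. h i (fst v i, snd v i))"
    proof -
      have "0 \<le> (\<Prod>i\<in>I. exp (lam * ((if c * fst v i > snd v i then 1 else -1) * w i)))"
        by (intro prod_nonneg) auto
      then have "ennreal (exp (- lam * T) * (\<Prod>i\<in>I. exp (lam * ((if c * fst v i > snd v i then 1 else -1) * w i))))
          = ennreal (exp (- lam * T)) * ennreal (\<Prod>i\<in>I. exp (lam * ((if c * fst v i > snd v i then 1 else -1) * w i)))"
        by (intro ennreal_mult) auto
      also have "\<dots> = ennreal (exp (- lam * T)) * (\<Prod>i\<in>I. h i (fst v i, snd v i))"
        by (simp add: h_def prod_ennreal)
      finally show ?thesis by (simp only: ee)
    qed
  qed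
  have "(\<integral>\<^sup>+v. ennreal (exp (lam * (F v - T))) \<partial>\<Omega>) = ennreal (exp (- lam * T)) * (\<integral>\<^sup>+v. (\<Prod>i\<in>I. h i (fst v i, snd v i)) \<partial>\<Omega>)"
    by (simp add: pw nn_integral_cmult fm)
  also have "\<dots> = ennreal (exp (- lam * T)) * (\<Prod>i\<in>I. \<integral>\<^sup>+p. h i p \<partial>(Ma i \<Otimes>\<^sub>M Mb i))"
    unfolding \<Omega>_def by (subst prod_pair_factor[OF _ pa pb hm]) (simp_all add: I_def)
  also have "\<dots> \<le> ennreal (exp (- lam * T)) * (\<Prod>i\<in>I. ennreal (exp (a i)))"
  proof (intro mult_left_mono prod_mono_ennreal)
    fix i assume i: "i \<in> I"
    have "\<bar>ub i - c * ua i\<bar> \<le> 1 + c"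
    proof -
      have "ua i \<in> {0..1}" "ub i \<in> {0..1}" using u01 i by (auto simp: I_def)
      moreover have "c * ua i \<le> c" using \<open>ua i \<in> {0..1}\<close> c by (simp add: mult_left_le)
      moreover have "0 \<le> c * ua i" using \<open>ua i \<in> {0..1}\<close> c by simp
      ultimately show ?thesis by (auto simp: abs_le_iff)
    qed
    then show "(\<integral>\<^sup>+p. h i p \<partial>(Ma i \<Otimes>\<^sub>M Mb i)) \<le> ennreal (exp (a i))"
      unfolding h_def Ma_def Mb_def a_def w_def \<sigma>_def
      by (rule coord_bound[OF s c lam])
  qed simp
  also have "\<dots> = ennreal (exp (- lam * T + (\<Sum>i\<in>I. a i)))"
  proof -
    have "(\<Prod>i\<in>I. ennreal (exp (a i))) = ennreal (\<Prod>i\<in>I. exp (a i))" by (simp add: prod_ennreal)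
    also have "\<dots> = ennreal (exp (\<Sum>i\<in>I. a i))" by (simp add: exp_sum I_def)
    finally have "ennreal (exp (- lam * T)) * (\<Prod>i\<in>I. ennreal (exp (a i))) = ennreal (exp (- lam * T)) * ennreal (exp (\<Sum>i\<in>I. a i))"
      by simp
    also have "\<dots> = ennreal (exp (- lam * T) * exp (\<Sum>i\<in>I. a i))" by (rule ennreal_mult[symmetric]) auto
    also have "\<dots> = ennreal (exp (- lam * T + (\<Sum>i\<in>I. a i)))" by (simp only: exp_add)
    finally show ?thesis .
  qed
  also have "\<dots> \<le> ennreal (exp (- lam * T - lam * (kappa0 * \<Delta>\<^sup>2 / (real m * s)) + 4 * lam\<^sup>2 * real m * s\<^sup>2))"
  proof (intro ennreal_leI exp_mono)
    have sb: "kappa0 * \<Delta>\<^sup>2 / (real m * s) \<le> kappa0 / (1 + c) * (\<Sum>i<m. \<bar>c * ua i - ub i\<bar> * min (\<bar>c * ua i - ub i\<bar> / \<sigma>) 1)"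
      unfolding \<sigma>_def by (rule sum_bound_real[OF m s c sumd _ D0 th]) simp
    have "(\<Sum>i\<in>I. a i) = - lam * (kappa0 / (1 + c) * (\<Sum>i<m. \<bar>c * ua i - ub i\<bar> * min (\<bar>c * ua i - ub i\<bar> / \<sigma>) 1)) + 4 * lam\<^sup>2 * real m * s\<^sup>2"
    proof -
      define b where "b = (\<lambda>i. \<bar>c * ua i - ub i\<bar> * min (\<bar>c * ua i - ub i\<bar> / \<sigma>) 1)"
      have ai: "\<And>i. a i = 4 * lam\<^sup>2 * s\<^sup>2 - (lam * (kappa0 / (1 + c))) * b i"
        by (simp add: a_def b_def abs_minus_commute)
      have "(\<Sum>i\<in>I. a i) = (\<Sum>i\<in>I. 4 * lam\<^sup>2 * s\<^sup>2) - (\<Sum>i\<in>I. (lam * (kappa0 / (1 + c))) * b i)"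
        by (simp only: ai sum_subtractf)
      also have "\<dots> = real m * (4 * lam\<^sup>2 * s\<^sup>2) - (lam * (kappa0 / (1 + c))) * (\<Sum>i<m. b i)"
        by (simp add: I_def sum_distrib_left)
      finally show ?thesis by (simp add: b_def algebra_simps)
    qed
    moreover have "lam * (kappa0 * \<Delta>\<^sup>2 / (real m * s)) \<le> lam * (kappa0 / (1 + c) * (\<Sum>i<m. \<bar>c * ua i - ub i\<bar> * min (\<bar>c * ua i - ub i\<bar> / \<sigma>) 1))"
      using sb lam by (intro mult_left_mono) auto
    ultimately show "- lam * T + (\<Sum>i\<in>I. a i) \<le> - lam * T - lam * (kappa0 * \<Delta>\<^sup>2 / (real m * s)) + 4 * lam\<^sup>2 * real m * s\<^sup>2"
      by linarith
  qed
  finally have "emeasure \<Omega> E \<le> ennreal (exp (- lam * T - lam * (kappa0 * \<Delta>\<^sup>2 / (real m * s)) + 4 * lam\<^sup>2 * real m * s\<^sup>2))"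
    using markov by (rule order_trans[rotated])
  then show ?thesis by (simp add: \<Omega>_def E_def F_def w_def I_def Ma_def Mb_def)
qed

lemma f_c_eq:
  assumes c: "c > 0"
  shows "f_c m ua ub c va vb = (\<Sum>i<m. (if c * va i > vb i then 1 else -1) * ((ub i - c * ua i) / (1 + c)))"
proof -
  have "c * e_a m ua c va vb + e_b m ub c va vb = (\<Sum>i<m. xsel c va vb i * (ub i - c * ua i))"
    unfolding e_a_def e_b_def by (simp add: sum_distrib_left sum_subtractf[symmetric] algebra_simps)
  then have "f_c m ua ub c va vb = (\<Sum>i<m. xsel c va vb i * (ub i - c * ua i)) / (1 + c)"
    by (simp add: f_c_def)
  also have "\<dots> = (\<Sum>i<m. xsel c va vb i * ((ub i - c * ua i) / (1 + c)))"
    by (simp add: sum_divide_distrib)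
  finally show ?thesis by (simp add: xsel_def)
qed

lemma envy_sum:
  fixes ua ub :: "nat \<Rightarrow> real"
  assumes A: "A \<subseteq> {..<m}" and env: "envy m ua ub A \<le> - \<Delta>" and c: "c > 0"
  shows "(1 + c) * \<Delta> \<le> (\<Sum>i<m. \<bar>c * ua i - ub i\<bar>)"
proof -
  define B where "B = {..<m} - A"
  define d where "d = (\<lambda>i. c * ua i - ub i)"
  have eab: "(\<Sum>i\<in>B. ua i) - (\<Sum>i\<in>A. ua i) \<le> - \<Delta>" using env by (simp add: envy_def envy_ab_def B_def)
  have eba: "(\<Sum>i\<in>A. ub i) - (\<Sum>i\<in>B. ub i) \<le> - \<Delta>" using env by (simp add: envy_def envy_ba_def B_def)
  have fA: "finite A" using A finite_subset by blast
  have split: "\<And>f. (\<Sum>i<m. f i) = (\<Sum>i\<in>B. f i) + (\<Sum>i\<in>A. f i)"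
    unfolding B_def using A by (intro sum.subset_diff) auto
  have "(\<Sum>i<m. (if i \<in> A then 1 else -1) * d i) = (\<Sum>i\<in>B. (if i \<in> A then 1 else -1) * d i) + (\<Sum>i\<in>A. (if i \<in> A then 1 else -1) * d i)"
    by (rule split)
  also have "\<dots> = (\<Sum>i\<in>A. d i) - (\<Sum>i\<in>B. d i)"
    by (simp add: B_def sum_negf)
  also have "\<dots> = c * ((\<Sum>i\<in>A. ua i) - (\<Sum>i\<in>B. ua i)) - ((\<Sum>i\<in>A. ub i) - (\<Sum>i\<in>B. ub i))"
    by (simp add: d_def sum_subtractf sum_distrib_left algebra_simps)
  finally have eq: "(\<Sum>i<m. (if i \<in> A then 1 else -1) * d i) = c * ((\<Sum>i\<in>A. ua i) - (\<Sum>i\<in>B. ua i)) - ((\<Sum>i\<in>A. ub i) - (\<Sum>i\<in>B. ub i))" .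
  have "c * \<Delta> \<le> c * ((\<Sum>i\<in>A. ua i) - (\<Sum>i\<in>B. ua i))" using eab c by (intro mult_left_mono) auto
  then have "(1 + c) * \<Delta> \<le> (\<Sum>i<m. (if i \<in> A then 1 else -1) * d i)" using eq eba by (simp add: algebra_simps)
  also have "\<dots> \<le> (\<Sum>i<m. \<bar>d i\<bar>)" by (intro sum_mono) auto
  finally show ?thesis by (simp add: d_def)
qed

lemma superpoly_exp:
  "superpoly_small (\<lambda>m. if m \<ge> N then exp (- (ln (real m))\<^sup>2 / 16) else 1)"
  unfolding superpoly_small_def
proof
  fix k :: nat
  have lim: "((\<lambda>x::real. exp (real k * ln x - (ln x)^2/16)) \<longlongrightarrow> 0) at_top" by real_asymp
  have "(\<lambda>m::nat. exp (real k * ln (real m) - (ln (real m))^2/16)) \<longlonglongrightarrow> 0"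
    by (rule filterlim_compose[OF lim filterlim_real_sequentially])
  moreover have "eventually (\<lambda>m. exp (real k * ln (real m) - (ln (real m))^2/16) =
       real m ^ k * (if m \<ge> N then exp (- (ln (real m))\<^sup>2 / 16) else 1)) sequentially"
    using eventually_ge_at_top[of "max N 1"]
  proof eventually_elim
    case (elim m)
    then have "m \<ge> N" "m \<ge> 1" by auto
    then have "real m ^ k = exp (real k * ln (real m))"
      by (simp add: exp_of_nat_mult[symmetric] ln_realpow[symmetric])
    moreover have "exp (real k * ln (real m) - (ln (real m))^2/16) = exp (real k * ln (real m)) * exp (- (ln (real m))\<^sup>2 / 16)"
      by (simp add: exp_add[symmetric])
    ultimately show ?case using \<open>m \<ge> N\<close> by simp
  qed
  ultimately show "(\<lambda>m. real m ^ k * (if m \<ge> N then exp (- (ln (real m))\<^sup>2 / 16) else 1)) \<longlonglongrightarrow> 0"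
    by (rule Lim_transform_eventually)
qed

lemma R1:
  fixes m P L D Q X :: real
  assumes m: "m > 0" and L: "L \<ge> 1" and D: "D > 0" and Du: "D \<le> m / (8 * L)"
    and E1: "480 * P * L \<le> m\<^sup>2" and X: "X = 15 * P / D\<^sup>2 * L + L\<^sup>2" and Q: "Q \<le> m * (X + 1)"
  shows "16 * D\<^sup>2 * Q \<le> m ^ 3"
proof -
  have DL: "D * L \<le> m / 8" using Du L by (simp add: field_simps)
  have DL2: "(D * L)\<^sup>2 \<le> (m / 8)\<^sup>2" using DL D L by (intro power_mono) auto
  have Dm: "D \<le> m / 8"
  proof -
    have "m / (8 * L) \<le> m / 8" using L m by (intro divide_left_mono) auto
    then show ?thesis using Du by linarith
  qed
  have D2: "D\<^sup>2 \<le> (m / 8)\<^sup>2" using Dm D by (intro power_mono) auto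
  have "16 * D\<^sup>2 * X = 240 * P * L + 16 * (D * L)\<^sup>2"
    using D by (simp add: X power2_eq_square field_simps)
  then have "16 * D\<^sup>2 * (X + 1) = 240 * P * L + 16 * (D * L)\<^sup>2 + 16 * D\<^sup>2" by (simp add: algebra_simps)
  also have "\<dots> \<le> m\<^sup>2 / 2 + 16 * (m / 8)\<^sup>2 + 16 * (m / 8)\<^sup>2"
    using E1 DL2 D2 by linarith
  also have "\<dots> = m\<^sup>2" by (simp add: power2_eq_square field_simps)
  finally have A: "16 * D\<^sup>2 * (X + 1) \<le> m\<^sup>2" .
  have "16 * D\<^sup>2 * Q \<le> 16 * D\<^sup>2 * (m * (X + 1))" using Q D by (intro mult_left_mono) auto
  also have "\<dots> = m * (16 * D\<^sup>2 * (X + 1))" by (simp add: algebra_simps)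
  also have "\<dots> \<le> m * m\<^sup>2" using A m by (intro mult_left_mono) auto
  finally show ?thesis by (simp add: power2_eq_square power3_eq_cube)
qed

lemma R2:
  fixes m r P L D Q X :: real
  assumes m: "m > 0" and r: "r > 0" and L: "L \<ge> 1" and D: "D > 0" and Dl: "r * L ^ 4 \<le> D\<^sup>2"
    and P: "P = m * r" and E2: "L ^ 4 + L\<^sup>2 \<le> m"
    and X: "X = 15 * P / D\<^sup>2 * L + L\<^sup>2" and Q: "Q \<le> m * (X + 1)"
  shows "Q * L\<^sup>2 \<le> 16 * m\<^sup>2"
proof -
  have L4: "r * L ^ 4 > 0" using r L by simp
  have "15 * P / D\<^sup>2 * L * L\<^sup>2 = 15 * m * r * L ^ 3 / D\<^sup>2" by (simp add: P power2_eq_square power3_eq_cube)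
  also have "\<dots> \<le> 15 * m * r * L ^ 3 / (r * L ^ 4)"
  proof (intro divide_left_mono)
    show "0 < D\<^sup>2 * (r * L ^ 4)" using D L4 by simp
  qed (use L4 Dl m r L in auto)
  also have "\<dots> = 15 * m / L" using r L by (simp add: power2_eq_square power3_eq_cube power4_eq_xxxx field_simps)
  also have "\<dots> \<le> 15 * m" using L m by (simp add: field_simps)
  finally have a: "15 * P / D\<^sup>2 * L * L\<^sup>2 \<le> 15 * m" .
  have "(X + 1) * L\<^sup>2 = 15 * P / D\<^sup>2 * L * L\<^sup>2 + (L ^ 4 + L\<^sup>2)"
    by (simp add: X power2_eq_square power4_eq_xxxx algebra_simps)
  also have "\<dots> \<le> 16 * m" using a E2 by linarith
  finally have b: "(X + 1) * L\<^sup>2 \<le> 16 * m" .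
  have "Q * L\<^sup>2 \<le> m * (X + 1) * L\<^sup>2" using Q by (intro mult_right_mono) auto
  also have "\<dots> = m * ((X + 1) * L\<^sup>2)" by simp
  also have "\<dots> \<le> m * (16 * m)" using b m by (intro mult_left_mono) auto
  finally show ?thesis by (simp add: power2_eq_square)
qed

lemma R3:
  fixes m r L D Q s lam T k :: real
  assumes r: "r > 0" and m: "m = r\<^sup>2" and Q: "Q > 0" and L: "L \<ge> 0"
    and s: "s = sqrt (m / Q)" and lam: "lam = L / (8 * r * s)"
    and T: "T = - (1/5) * (1 / (m * r)) * sqrt Q * D\<^sup>2 + m / sqrt Q * L"
    and k: "k \<ge> 1/5"
  shows "- lam * T - lam * (k * D\<^sup>2 / (m * s)) + 4 * lam\<^sup>2 * m * s\<^sup>2 \<le> - L\<^sup>2 / 16"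
proof -
  define sQ where "sQ = sqrt Q"
  have sQ: "sQ > 0" using Q by (simp add: sQ_def)
  have seq: "s = r / sQ" using r Q by (simp add: s sQ_def m real_sqrt_divide)
  have spos: "s > 0" using seq r sQ by simp
  define M where "M = D\<^sup>2 / (m * s)"
  have M0: "M \<ge> 0" using spos r by (simp add: M_def m)
  have lam0: "lam \<ge> 0" using L r spos by (simp add: lam)
  have TM: "T = - M / 5 + r * s * L"
    using r sQ by (simp add: T M_def seq m sQ_def[symmetric] power2_eq_square field_simps)
  have l1: "lam * (r * s * L) = L\<^sup>2 / 8" using r spos by (simp add: lam power2_eq_square field_simps)
  have l2: "4 * lam\<^sup>2 * m * s\<^sup>2 = L\<^sup>2 / 16" using r spos by (simp add: lam m power2_eq_square field_simps)
  have l3: "lam * M * (1/5 - k) \<le> 0" using lam0 M0 k by (intro mult_nonneg_nonpos) auto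
  have "- lam * T - lam * (k * D\<^sup>2 / (m * s)) + 4 * lam\<^sup>2 * m * s\<^sup>2
      = lam * M * (1/5 - k) - lam * (r * s * L) + 4 * lam\<^sup>2 * m * s\<^sup>2"
  proof -
    have "m > 0" using r by (simp add: m)
    then show ?thesis using spos by (simp add: TM M_def field_simps)
  qed
  also have "\<dots> \<le> - L\<^sup>2 / 16" using l1 l2 l3 by linarith
  finally show ?thesis .
qed

lemma obs_prob:
  assumes "m > 0" "num_queries m D > 0"
  shows "prob_space (obs_measure m D ua ub)"
  unfolding obs_measure_def Let_def
  by (intro prob_space_pair prob_space_PiM prob_space_normal_density) (use assms in auto)

lemma fixed_m:
  fixes m :: nat and \<Delta> c :: real and ua ub :: "nat \<Rightarrow> real" and A :: "nat set"
  assumes m2: "m \<ge> 2" and c: "c > 0" and L1: "1 \<le> ln (real m)"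
    and E1: "480 * (real m * sqrt (real m)) * ln (real m) \<le> (real m)\<^sup>2"
    and E2: "ln (real m) ^ 4 + (ln (real m))\<^sup>2 \<le> real m"
    and Dl: "\<Delta> \<ge> real m powr (1/4) * (ln (real m))\<^sup>2"
    and Du: "\<Delta> \<le> real m / (8 * ln (real m))"
    and u01: "\<forall>i<m. ua i \<in> {0..1} \<and> ub i \<in> {0..1}"
    and A: "A \<subseteq> {..<m}" and env: "envy m ua ub A \<le> - \<Delta>"
  shows "measure (obs_measure m \<Delta> ua ub)
         {v \<in> space (obs_measure m \<Delta> ua ub).
            f_c m ua ub c (fst v) (snd v) >
              - (1/5) * real m powr (-3/2) * sqrt (real (num_queries m \<Delta>)) * \<Delta>\<^sup>2
              + real m / sqrt (real (num_queries m \<Delta>)) * ln (real m)}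
         \<le> exp (- (ln (real m))\<^sup>2 / 16)"
proof -
  define L where "L = ln (real m)"
  define Q where "Q = real (num_queries m \<Delta>)"
  define r where "r = sqrt (real m)"
  define X where "X = 15 * real m powr (3/2) / \<Delta>\<^sup>2 * L + L\<^sup>2"
  define s where "s = sqrt (real m / Q)"
  define lam where "lam = L / (8 * r * s)"
  define T where "T = - (1/5) * real m powr (-3/2) * sqrt Q * \<Delta>\<^sup>2 + real m / sqrt Q * L"
  have mpos: "real m > 0" using m2 by simp
  have m1: "m \<ge> 1" using m2 by simp
  have rpos: "r > 0" using mpos by (simp add: r_def)
  have r2: "real m = r\<^sup>2" using mpos by (simp add: r_def)
  have p32: "real m powr (3/2) = real m * r"
  proof -
    have "real m powr (3/2) = real m powr (1 + 1/2)" by simp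
    also have "\<dots> = real m powr 1 * real m powr (1/2)" by (rule powr_add)
    also have "\<dots> = real m * r" using mpos by (simp add: r_def powr_half_sqrt)
    finally show ?thesis .
  qed
  have pm32: "real m powr (-3/2) = 1 / (real m * r)"
  proof -
    have "(-3/2::real) = - (3/2)" by simp
    then have "real m powr (-3/2) = real m powr (- (3/2))" by (simp only:)
    also have "\<dots> = inverse (real m powr (3/2))" by (rule powr_minus)
    also have "\<dots> = 1 / (real m * r)" by (simp only: p32 inverse_eq_divide)
    finally show ?thesis .
  qed
  have p14: "(real m powr (1/4))\<^sup>2 = r"
  proof -
    have "(real m powr (1/4))\<^sup>2 = real m powr (1/4) * real m powr (1/4)" by (simp add: power2_eq_square)
    also have "\<dots> = real m powr (1/4 + 1/4)" by (rule powr_add[symmetric])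
    also have "(1/4 + 1/4 :: real) = 1/2" by simp
    also have "real m powr (1/2) = r" using mpos unfolding r_def by (rule powr_half_sqrt[OF less_imp_le])
    finally show ?thesis .
  qed
  have L1': "L \<ge> 1" using L1 by (simp add: L_def)
  have ppos: "real m powr (1/4) > 0" using mpos by simp
  have Dpos: "\<Delta> > 0"
  proof -
    have "0 < real m powr (1/4) * L\<^sup>2" using ppos L1' by simp
    then show ?thesis using Dl by (simp add: L_def)
  qed
  have Dl2: "r * L ^ 4 \<le> \<Delta>\<^sup>2"
  proof -
    have "real m powr (1/4) * L\<^sup>2 \<le> \<Delta>" using Dl by (simp add: L_def)
    then have "(real m powr (1/4) * L\<^sup>2)\<^sup>2 \<le> \<Delta>\<^sup>2" using ppos by (intro power_mono) auto
    moreover have "(real m powr (1/4) * L\<^sup>2)\<^sup>2 = (real m powr (1/4))\<^sup>2 * (L\<^sup>2)\<^sup>2" by (rule power_mult_distrib)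
    moreover have "(L\<^sup>2)\<^sup>2 = L ^ 4" by (simp add: power_mult[symmetric])
    ultimately show ?thesis by (simp add: p14)
  qed
  have Xpos: "X > 0"
  proof -
    have "0 \<le> 15 * real m powr (3/2) / \<Delta>\<^sup>2 * L" using L1' by simp
    moreover have "L\<^sup>2 > 0" using L1' by simp
    ultimately show ?thesis unfolding X_def by linarith
  qed
  have Qeq: "Q = real m * of_int \<lceil>X\<rceil>"
  proof -
    have "\<lceil>X\<rceil> \<ge> 0" using Xpos by simp
    have "num_queries m \<Delta> = m * nat \<lceil>X\<rceil>" unfolding num_queries_def X_def L_def by (rule refl)
    then have "Q = real m * real (nat \<lceil>X\<rceil>)" by (simp only: Q_def of_nat_mult)
    also have "real (nat \<lceil>X\<rceil>) = of_int \<lceil>X\<rceil>" using \<open>\<lceil>X\<rceil> \<ge> 0\<close> by (rule of_nat_nat)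
    finally show ?thesis .
  qed
  have cX: "X \<le> of_int \<lceil>X\<rceil>" "of_int \<lceil>X\<rceil> \<le> X + 1"
    by (simp_all add: le_of_int_ceiling of_int_ceiling_le_add_one)
  have Qpos: "Q > 0" using Qeq cX Xpos mpos by (simp add: zero_less_mult_iff)
  have Qle: "Q \<le> real m * (X + 1)" using Qeq cX mpos by (simp add: mult_left_mono)
  have X': "X = 15 * (real m * r) / \<Delta>\<^sup>2 * L + L\<^sup>2" by (simp add: X_def p32)
  have R1': "16 * \<Delta>\<^sup>2 * Q \<le> real m ^ 3"
    by (rule R1[OF mpos L1' Dpos _ _ X' Qle]) (use Du E1 in \<open>simp_all add: L_def r_def\<close>)
  have R2': "Q * L\<^sup>2 \<le> 16 * (real m)\<^sup>2"
    by (rule R2[OF mpos rpos L1' Dpos Dl2 refl _ X' Qle]) (use E2 in \<open>simp add: L_def\<close>)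
  have spos: "s > 0" using mpos Qpos by (simp add: s_def)
  have s2: "s\<^sup>2 = real m / Q" using mpos Qpos by (simp add: s_def)
  have th: "4 * \<Delta> \<le> real m * s"
  proof -
    have "(4 * \<Delta>)\<^sup>2 \<le> (real m * s)\<^sup>2"
    proof -
      have "(real m * s)\<^sup>2 = (real m)\<^sup>2 * s\<^sup>2" by (rule power_mult_distrib)
      also have "\<dots> = (real m)\<^sup>2 * (real m / Q)" by (simp only: s2)
      also have "\<dots> = real m ^ 3 / Q" by (simp add: power2_eq_square power3_eq_cube)
      finally have "(real m * s)\<^sup>2 = real m ^ 3 / Q" .
      moreover have "16 * \<Delta>\<^sup>2 \<le> real m ^ 3 / Q" using R1' Qpos by (simp add: field_simps)
      ultimately show ?thesis by (simp add: power_mult_distrib)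
    qed
    then show ?thesis by (rule power2_le_imp_le) (use mpos spos in simp)
  qed
  have lam0: "0 \<le> lam" using L1' rpos spos by (simp add: lam_def)
  have lam1: "lam \<le> 1/2"
  proof -
    have "L\<^sup>2 \<le> (4 * r * s)\<^sup>2"
    proof -
      have "(4 * r * s)\<^sup>2 = 16 * r\<^sup>2 * s\<^sup>2" by (simp add: power_mult_distrib)
      also have "\<dots> = 16 * real m * (real m / Q)" by (simp only: s2 r2)
      also have "\<dots> = 16 * (real m)\<^sup>2 / Q" by (simp add: power2_eq_square)
      finally have "(4 * r * s)\<^sup>2 = 16 * (real m)\<^sup>2 / Q" .
      moreover have "L\<^sup>2 \<le> 16 * (real m)\<^sup>2 / Q" using R2' Qpos by (simp add: field_simps)
      ultimately show ?thesis by simp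
    qed
    then have "L \<le> 4 * r * s" by (rule power2_le_imp_le) (use rpos spos in simp)
    then show ?thesis using rpos spos by (simp add: lam_def field_simps)
  qed
  have sumd: "(1 + c) * \<Delta> \<le> (\<Sum>i<m. \<bar>c * ua i - ub i\<bar>)" by (rule envy_sum[OF A env c])
  note mb = main_bound[OF m1 spos c u01 sumd less_imp_le[OF Dpos] th lam0 lam1, of T]
  have L0: "L \<ge> 0" using L1' by simp
  have T': "T = - (1/5) * (1 / (real m * r)) * sqrt Q * \<Delta>\<^sup>2 + real m / sqrt Q * L"
    by (simp only: T_def pm32)
  have ex: "- lam * T - lam * (kappa0 * \<Delta>\<^sup>2 / (real m * s)) + 4 * lam\<^sup>2 * real m * s\<^sup>2 \<le> - L\<^sup>2 / 16"
    by (rule R3[OF rpos r2 Qpos L0 s_def lam_def T' kappa0_ge])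
  define \<Omega> where "\<Omega> = obs_measure m \<Delta> ua ub"
  have Oeq: "\<Omega> = (\<Pi>\<^sub>M i\<in>{..<m}. density lborel (normal_density (ua i) s)) \<Otimes>\<^sub>M (\<Pi>\<^sub>M i\<in>{..<m}. density lborel (normal_density (ub i) s))"
    by (simp add: \<Omega>_def obs_measure_def Let_def s_def Q_def)
  have ev: "{v \<in> space \<Omega>. f_c m ua ub c (fst v) (snd v) >
              - (1/5) * real m powr (-3/2) * sqrt (real (num_queries m \<Delta>)) * \<Delta>\<^sup>2
              + real m / sqrt (real (num_queries m \<Delta>)) * ln (real m)}
      = {v \<in> space \<Omega>. T < (\<Sum>i<m. (if c * fst v i > snd v i then 1 else -1) * ((ub i - c * ua i) / (1 + c)))}"
    by (simp add: f_c_eq[OF c] T_def Q_def L_def)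
  have "emeasure \<Omega> {v \<in> space \<Omega>. T < (\<Sum>i<m. (if c * fst v i > snd v i then 1 else -1) * ((ub i - c * ua i) / (1 + c)))}
      \<le> ennreal (exp (- lam * T - lam * (kappa0 * \<Delta>\<^sup>2 / (real m * s)) + 4 * lam\<^sup>2 * real m * s\<^sup>2))"
    unfolding Oeq by (rule mb)
  also have "\<dots> \<le> ennreal (exp (- L\<^sup>2 / 16))" using ex by (intro ennreal_leI) simp
  finally have em: "emeasure \<Omega> {v \<in> space \<Omega>. T < (\<Sum>i<m. (if c * fst v i > snd v i then 1 else -1) * ((ub i - c * ua i) / (1 + c)))}
      \<le> ennreal (exp (- L\<^sup>2 / 16))" .
  have qpos: "num_queries m \<Delta> > 0" using Qpos by (simp add: Q_def)
  interpret O: prob_space \<Omega> unfolding \<Omega>_def by (rule obs_prob) (use mpos qpos in auto)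
  have "measure \<Omega> {v \<in> space \<Omega>. T < (\<Sum>i<m. (if c * fst v i > snd v i then 1 else -1) * ((ub i - c * ua i) / (1 + c)))}
      \<le> exp (- L\<^sup>2 / 16)"
    using em by (simp add: O.emeasure_eq_measure)
  then show ?thesis using ev by (simp add: \<Omega>_def L_def)
qed

lemma nq_pos:
  assumes "m \<ge> 2"
  shows "num_queries m D > 0"
proof -
  have "ln (real m) > 0" using assms by (intro ln_gt_zero) simp
  then have L2: "(ln (real m))\<^sup>2 > 0" by simp
  have "0 \<le> 15 * real m powr (3/2) / D\<^sup>2 * ln (real m)" using \<open>ln (real m) > 0\<close> by simp
  then have "15 * real m powr (3/2) / D\<^sup>2 * ln (real m) + (ln (real m))\<^sup>2 > 0" using L2 by linarith
  then have "\<lceil>15 * real m powr (3/2) / D\<^sup>2 * ln (real m) + (ln (real m))\<^sup>2\<rceil> > 0" by simp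
  then show ?thesis using assms by (simp add: num_queries_def)
qed

theorem lemma13:
  fixes D :: "nat \<Rightarrow> real" and c :: real
  assumes D_lower: "\<forall>m. D m \<ge> real m powr (1/4) * (ln (real m))\<^sup>2"
    and D_upper: "D \<in> o(\<lambda>m. real m / ln (real m))"
    and c_pos: "c > 0"
  shows "\<exists>g. superpoly_small g \<and>
    (\<forall>m \<ge> 2. \<forall>ua ub :: nat \<Rightarrow> real.
       (\<forall>i<m. ua i \<in> {0..1} \<and> ub i \<in> {0..1}) \<longrightarrow>
       (\<exists>A\<subseteq>{..<m}. envy m ua ub A \<le> - D m) \<longrightarrow>
       measure (obs_measure m (D m) ua ub)
         {v \<in> space (obs_measure m (D m) ua ub).
            f_c m ua ub c (fst v) (snd v) >
              - (1/5) * real m powr (-3/2) * sqrt (real (num_queries m (D m))) * (D m)\<^sup>2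
              + real m / sqrt (real (num_queries m (D m))) * ln (real m)}
       \<le> g m)"
proof -
  have sm: "eventually (\<lambda>m. norm (D m) \<le> (1/8) * norm (real m / ln (real m))) at_top"
    by (rule landau_o.smallD[OF D_upper]) simp
  have e1: "eventually (\<lambda>m::nat. 480 * (real m * sqrt (real m)) * ln (real m) \<le> (real m)\<^sup>2) at_top"
    by real_asymp
  have e2: "eventually (\<lambda>m::nat. ln (real m) ^ 4 + (ln (real m))\<^sup>2 \<le> real m) at_top"
    by real_asymp
  have e3: "eventually (\<lambda>m::nat. 1 \<le> ln (real m)) at_top"
    by real_asymp
  have "eventually (\<lambda>m. norm (D m) \<le> (1/8) * norm (real m / ln (real m)) \<and>
      480 * (real m * sqrt (real m)) * ln (real m) \<le> (real m)\<^sup>2 \<and>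
      ln (real m) ^ 4 + (ln (real m))\<^sup>2 \<le> real m \<and> 1 \<le> ln (real m)) at_top"
    using sm e1 e2 e3 by eventually_elim auto
  then obtain N where N: "\<And>m. m \<ge> N \<Longrightarrow> norm (D m) \<le> (1/8) * norm (real m / ln (real m)) \<and>
      480 * (real m * sqrt (real m)) * ln (real m) \<le> (real m)\<^sup>2 \<and>
      ln (real m) ^ 4 + (ln (real m))\<^sup>2 \<le> real m \<and> 1 \<le> ln (real m)"
    unfolding eventually_at_top_linorder by blast
  define g where "g = (\<lambda>m. if m \<ge> N then exp (- (ln (real m))\<^sup>2 / 16) else (1::real))"
  show ?thesis
  proof (intro exI[of _ g] conjI allI impI)
    show "superpoly_small g" unfolding g_def by (rule superpoly_exp)
  next
    fix m :: nat and ua ub :: "nat \<Rightarrow> real"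
    assume m2: "m \<ge> 2" and u01: "\<forall>i<m. ua i \<in> {0..1} \<and> ub i \<in> {0..1}"
      and ex: "\<exists>A\<subseteq>{..<m}. envy m ua ub A \<le> - D m"
    obtain A where A: "A \<subseteq> {..<m}" "envy m ua ub A \<le> - D m" using ex by blast
    show "measure (obs_measure m (D m) ua ub)
         {v \<in> space (obs_measure m (D m) ua ub).
            f_c m ua ub c (fst v) (snd v) >
              - (1/5) * real m powr (-3/2) * sqrt (real (num_queries m (D m))) * (D m)\<^sup>2
              + real m / sqrt (real (num_queries m (D m))) * ln (real m)}
       \<le> g m"
    proof (cases "m \<ge> N")
      case True
      note Nm = N[OF True]
      have L1: "1 \<le> ln (real m)" using Nm by blast
      have Du: "D m \<le> real m / (8 * ln (real m))"
      proof -
        have "norm (D m) \<le> (1/8) * norm (real m / ln (real m))" using Nm by blast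
        moreover have ab: "\<bar>ln (real m)\<bar> = ln (real m)" using L1 by simp
        ultimately have "\<bar>D m\<bar> \<le> (1/8) * (real m / ln (real m))" by (simp add: ab)
        then have "D m \<le> (1/8) * (real m / ln (real m))" by linarith
        then show ?thesis by simp
      qed
      have "measure (obs_measure m (D m) ua ub)
         {v \<in> space (obs_measure m (D m) ua ub).
            f_c m ua ub c (fst v) (snd v) >
              - (1/5) * real m powr (-3/2) * sqrt (real (num_queries m (D m))) * (D m)\<^sup>2
              + real m / sqrt (real (num_queries m (D m))) * ln (real m)}
         \<le> exp (- (ln (real m))\<^sup>2 / 16)"
        by (rule fixed_m[OF m2 c_pos L1 _ _ _ Du u01 A]) (use Nm D_lower in auto)
      then show ?thesis using True by (simp add: g_def)
    next
      case False
      interpret O: prob_space "obs_measure m (D m) ua ub"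
        by (rule obs_prob) (use m2 nq_pos[OF m2] in auto)
      show ?thesis using False by (simp add: g_def)
    qed
  qed
qed

end
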